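(* Let $X\subset\mathbb{R}^n$ be a subanalytic set and $f\in\mathcal{C}(X)$. Then there exists a subanalytic function $h:X\to(0,+\infty)$ such that $|f(x)|\le h(x)$ for all $x\in X$.
   Context: "Subanalytic" means globally subanalytic: definable in the expansion of the real field by all restricted analytic functions (functions $\mathbb{R}^k\to\mathbb{R}$ agreeing on $[-1,1]^k$ with a function analytic on a neighbourhood of $[-1,1]^k$ and vanishing outside it); a function is subanalytic if its graph is; $\log$ is not subanalytic. $\mathcal{C}(X)$ is the $\mathbb{R}$-algebra of real-valued functions on $X$ generated by all subanalytic functions $X\to\mathbb{R}$ and all functions $x\mapsto\log g(x)$ with $g:X\to(0,+\infty)$ subanalytic. *)

theory Defs
  imports "HOL-Analysis.Analysis"
begin

text \<open>Points of R^n are represented as real lists of length n.\<close>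

definition Ln :: "nat \<Rightarrow> real list set" where
  "Ln n = {xs. length xs = n}"

definition real_analytic_at :: "nat \<Rightarrow> (real list \<Rightarrow> real) \<Rightarrow> real list \<Rightarrow> bool" where
  "real_analytic_at k g a \<longleftrightarrow>
     (\<exists>c :: nat list \<Rightarrow> real. \<exists>r > 0. \<forall>x. length x = k \<and> (\<forall>i<k. \<bar>x ! i - a ! i\<bar> < r) \<longrightarrow>
        ((\<lambda>\<alpha>. c \<alpha> * (\<Prod>i<k. (x ! i - a ! i) ^ (\<alpha> ! i))) has_sum g x) {\<alpha>. length \<alpha> = k})"

definition restricted_analytic :: "nat \<Rightarrow> (real list \<Rightarrow> real) \<Rightarrow> bool" where
  "restricted_analytic k f \<longleftrightarrow>
     (\<exists>g \<epsilon>. \<epsilon> > 0 \<and>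
        (\<forall>a. length a = k \<and> (\<forall>i<k. \<bar>a ! i\<bar> < 1 + \<epsilon>) \<longrightarrow> real_analytic_at k g a) \<and>
        (\<forall>x. length x = k \<longrightarrow>
            f x = (if (\<forall>i<k. \<bar>x ! i\<bar> \<le> 1) then g x else 0)))"

text \<open>Globally subanalytic subsets of R^n: the smallest structure (in the sense of van den Dries,
  Tame Topology, Ch. 1 (2.1)) on the real line containing all singletons (parameters), the order,
  the graphs of addition and multiplication, and the graphs of all restricted analytic
  functions; i.e. the sets definable with parameters in (R,<,+,*,(restricted analytic)).\<close>
inductive subanalytic :: "nat \<Rightarrow> real list set \<Rightarrow> bool" where
  sa_empty: "subanalytic n {}"
| sa_compl: "subanalytic n A \<Longrightarrow> subanalytic n (Ln n - A)"
| sa_union: "subanalytic n A \<Longrightarrow> subanalytic n B \<Longrightarrow> subanalytic n (A \<union> B)"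
| sa_prod_left: "subanalytic n A \<Longrightarrow> subanalytic (Suc n) {x # xs | x xs. xs \<in> A}"
| sa_prod_right: "subanalytic n A \<Longrightarrow> subanalytic (Suc n) {xs @ [x] | x xs. xs \<in> A}"
| sa_diag: "subanalytic (Suc n) {xs \<in> Ln (Suc n). hd xs = last xs}"
| sa_proj: "subanalytic (Suc n) A \<Longrightarrow> subanalytic n (butlast ` A)"
| sa_const: "subanalytic 1 {[r]}"
| sa_less: "subanalytic 2 {[x, y] | x y. x < y}"
| sa_add: "subanalytic 3 {[x, y, x + y] | x y. True}"
| sa_mult: "subanalytic 3 {[x, y, x * y] | x y. True}"
| sa_ran: "restricted_analytic k f \<Longrightarrow> subanalytic (Suc k) {xs @ [f xs] | xs. length xs = k}"

definition subanalytic_fun :: "nat \<Rightarrow> real list set \<Rightarrow> (real list \<Rightarrow> real) \<Rightarrow> bool" where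
  "subanalytic_fun n X f \<longleftrightarrow> subanalytic (Suc n) {xs @ [f xs] | xs. xs \<in> X}"

text \<open>The R-algebra C(X) of functions X -> R generated by subanalytic functions and logarithms
  of positive subanalytic functions (functions are identified when they agree on X).\<close>
inductive constructible :: "nat \<Rightarrow> real list set \<Rightarrow> (real list \<Rightarrow> real) \<Rightarrow> bool"
  for n :: nat and X :: "real list set" where
  c_sa: "subanalytic_fun n X f \<Longrightarrow> constructible n X f"
| c_log: "subanalytic_fun n X g \<Longrightarrow> (\<forall>x\<in>X. g x > 0) \<Longrightarrow> constructible n X (\<lambda>x. ln (g x))"
| c_add: "constructible n X f \<Longrightarrow> constructible n X g \<Longrightarrow> constructible n X (\<lambda>x. f x + g x)"
| c_mult: "constructible n X f \<Longrightarrow> constructible n X g \<Longrightarrow> constructible n X (\<lambda>x. f x * g x)"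
| c_scale: "constructible n X f \<Longrightarrow> constructible n X (\<lambda>x. c * f x)"
| c_cong: "constructible n X f \<Longrightarrow> (\<forall>x\<in>X. f x = g x) \<Longrightarrow> constructible n X g"

end

theory Submission
  imports Defs
begin

lemma sa_sub_Ln: "subanalytic n A \<Longrightarrow> A \<subseteq> Ln n"
  by (induction rule: subanalytic.induct) (auto simp: Ln_def)

lemma sa_Ln: "subanalytic n (Ln n)"
  using sa_compl[OF sa_empty, of n] by simp

lemma sa_inter:
  assumes "subanalytic n A" "subanalytic n B" shows "subanalytic n (A \<inter> B)"
proof -
  have "A \<inter> B = Ln n - ((Ln n - A) \<union> (Ln n - B))"
    using sa_sub_Ln[OF assms(1)] by auto
  thus ?thesis using assms by (metis sa_compl sa_union)
qed

lemma sa_conj: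
  assumes "subanalytic n {xs \<in> Ln n. P xs}" "subanalytic n {xs \<in> Ln n. Q xs}"
  shows "subanalytic n {xs \<in> Ln n. P xs \<and> Q xs}"
proof -
  have "{xs \<in> Ln n. P xs \<and> Q xs} = {xs \<in> Ln n. P xs} \<inter> {xs \<in> Ln n. Q xs}" by auto
  thus ?thesis using sa_inter[OF assms] by simp
qed

lemma sa_prod_left_iter:
  assumes "subanalytic k A"
  shows "subanalytic (m + k) {xs @ ys | xs ys. length xs = m \<and> ys \<in> A}"
proof (induction m)
  case 0
  thus ?case using assms by simp
next
  case (Suc m)
  have "{xs @ ys | xs ys. length xs = Suc m \<and> ys \<in> A}
      = {x # zs | x zs. zs \<in> {xs @ ys | xs ys. length xs = m \<and> ys \<in> A}}"
  proof (intro set_eqI iffI)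
    fix w assume "w \<in> {xs @ ys | xs ys. length xs = Suc m \<and> ys \<in> A}"
    then obtain xs ys where "w = xs @ ys" "length xs = Suc m" "ys \<in> A" by blast
    then obtain x xs' where "xs = x # xs'" by (cases xs) auto
    thus "w \<in> {x # zs | x zs. zs \<in> {xs @ ys | xs ys. length xs = m \<and> ys \<in> A}}"
      using \<open>w = xs @ ys\<close> \<open>length xs = Suc m\<close> \<open>ys \<in> A\<close> by auto
  next
    fix w assume "w \<in> {x # zs | x zs. zs \<in> {xs @ ys | xs ys. length xs = m \<and> ys \<in> A}}"
    then obtain x xs ys where "w = x # xs @ ys" "length xs = m" "ys \<in> A" by blast
    thus "w \<in> {xs @ ys | xs ys. length xs = Suc m \<and> ys \<in> A}"
      by (metis (mono_tags, lifting) Cons_eq_appendI length_Cons mem_Collect_eq)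
  qed
  thus ?case using sa_prod_left[OF Suc.IH] by simp
qed

lemma sa_prod_right_iter:
  assumes "subanalytic k A"
  shows "subanalytic (k + m) {ys @ xs | ys xs. ys \<in> A \<and> length xs = m}"
proof (induction m)
  case 0
  thus ?case using assms by simp
next
  case (Suc m)
  have "{ys @ xs | ys xs. ys \<in> A \<and> length xs = Suc m}
      = {zs @ [x] | x zs. zs \<in> {ys @ xs | ys xs. ys \<in> A \<and> length xs = m}}"
  proof (intro set_eqI iffI)
    fix w assume "w \<in> {ys @ xs | ys xs. ys \<in> A \<and> length xs = Suc m}"
    then obtain xs ys where "w = ys @ xs" "length xs = Suc m" "ys \<in> A" by blast
    then obtain x xs' where "xs = xs' @ [x]" by (cases xs rule: rev_cases) auto
    thus "w \<in> {zs @ [x] | x zs. zs \<in> {ys @ xs | ys xs. ys \<in> A \<and> length xs = m}}"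
      using \<open>w = ys @ xs\<close> \<open>length xs = Suc m\<close> \<open>ys \<in> A\<close> by auto
  next
    fix w assume "w \<in> {zs @ [x] | x zs. zs \<in> {ys @ xs | ys xs. ys \<in> A \<and> length xs = m}}"
    then obtain x xs ys where "w = (ys @ xs) @ [x]" "length xs = m" "ys \<in> A" by blast
    thus "w \<in> {ys @ xs | ys xs. ys \<in> A \<and> length xs = Suc m}"
      by (metis (mono_tags, lifting) append_assoc length_append_singleton mem_Collect_eq)
  qed
  thus ?case using sa_prod_right[OF Suc.IH] by simp
qed

lemma sa_proj_iter:
  "subanalytic (n + k) A \<Longrightarrow> subanalytic n {xs. \<exists>ys. length ys = k \<and> xs @ ys \<in> A}"
proof (induction k arbitrary: A)
  case 0
  thus ?case by simp
next
  case (Suc k)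
  have A: "A \<subseteq> Ln (Suc (n + k))" using sa_sub_Ln Suc.prems by simp
  have "{xs. \<exists>ys. length ys = Suc k \<and> xs @ ys \<in> A}
      = {xs. \<exists>ys. length ys = k \<and> xs @ ys \<in> butlast ` A}"
  proof (intro set_eqI iffI)
    fix xs assume "xs \<in> {xs. \<exists>ys. length ys = Suc k \<and> xs @ ys \<in> A}"
    then obtain ys where "length ys = Suc k" "xs @ ys \<in> A" by blast
    then obtain y ys' where "ys = ys' @ [y]" by (cases ys rule: rev_cases) auto
    hence "butlast (xs @ ys) = xs @ ys'" by (simp add: butlast_append)
    thus "xs \<in> {xs. \<exists>ys. length ys = k \<and> xs @ ys \<in> butlast ` A}"
      using \<open>xs @ ys \<in> A\<close> \<open>length ys = Suc k\<close> \<open>ys = ys' @ [y]\<close>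
      by (metis (mono_tags, lifting) image_eqI length_append_singleton mem_Collect_eq nat.inject)
  next
    fix xs assume "xs \<in> {xs. \<exists>ys. length ys = k \<and> xs @ ys \<in> butlast ` A}"
    then obtain ys w where "length ys = k" "w \<in> A" "xs @ ys = butlast w" by blast
    moreover have "w \<noteq> []" using A \<open>w \<in> A\<close> by (auto simp: Ln_def)
    ultimately have "w = xs @ ys @ [last w]" by (metis append_assoc append_butlast_last_id)
    thus "xs \<in> {xs. \<exists>ys. length ys = Suc k \<and> xs @ ys \<in> A}"
      using \<open>length ys = k\<close> \<open>w \<in> A\<close>
      by (metis (mono_tags, lifting) length_append_singleton mem_Collect_eq)
  qed
  moreover have "subanalytic (n + k) (butlast ` A)" using sa_proj Suc.prems by simp
  ultimately show ?case using Suc.IH by simp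
qed


lemma sa_diag_gen:
  assumes "i < j" "j < m"
  shows "subanalytic m {w \<in> Ln m. w ! i = w ! j}"
proof -
  define D where "D = {xs \<in> Ln (Suc (j - i)). hd xs = last xs}"
  have "subanalytic (Suc (j - i)) D" unfolding D_def by (rule sa_diag)
  hence "subanalytic (Suc (j - i) + (m - j - 1)) {ys @ xs | ys xs. ys \<in> D \<and> length xs = m - j - 1}"
    by (rule sa_prod_right_iter)
  hence S: "subanalytic (i + (Suc (j - i) + (m - j - 1)))
     {as @ zs | as zs. length as = i \<and> zs \<in> {ys @ xs | ys xs. ys \<in> D \<and> length xs = m - j - 1}}"
    by (rule sa_prod_left_iter)
  have e: "i + (Suc (j - i) + (m - j - 1)) = m" using assms by simp
  have "{as @ zs | as zs. length as = i \<and> zs \<in> {ys @ xs | ys xs. ys \<in> D \<and> length xs = m - j - 1}}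
      = {w \<in> Ln m. w ! i = w ! j}"
  proof (intro set_eqI iffI)
    fix w assume "w \<in> {as @ zs | as zs. length as = i \<and> zs \<in> {ys @ xs | ys xs. ys \<in> D \<and> length xs = m - j - 1}}"
    then obtain as ds bs where w: "w = as @ ds @ bs" "length as = i" "ds \<in> D" "length bs = m - j - 1"
      by blast
    have ld: "length ds = Suc (j - i)" and hl: "hd ds = last ds" using w(3) by (auto simp: D_def Ln_def)
    have "w ! i = ds ! 0" using w ld by (simp add: nth_append)
    also have "\<dots> = hd ds" using ld by (cases ds) auto
    also have "\<dots> = last ds" by (rule hl)
    also have "\<dots> = ds ! (j - i)" using ld by (metis diff_Suc_1 last_conv_nth list.size(3) nat.distinct(1))
    also have "\<dots> = w ! j" using w ld assms by (simp add: nth_append)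
    finally show "w \<in> {w \<in> Ln m. w ! i = w ! j}" using w ld assms by (auto simp: Ln_def)
  next
    fix w assume "w \<in> {w \<in> Ln m. w ! i = w ! j}"
    hence lw: "length w = m" and eq: "w ! i = w ! j" by (auto simp: Ln_def)
    define as where "as = take i w"
    define ds where "ds = take (Suc (j - i)) (drop i w)"
    define bs where "bs = drop (Suc j) w"
    have "take (i + Suc (j - i)) w = as @ ds" unfolding as_def ds_def by (rule take_add)
    moreover have "i + Suc (j - i) = Suc j" using assms by simp
    ultimately have wd: "w = as @ ds @ bs" unfolding bs_def by (metis append_assoc append_take_drop_id)
    have ld: "length ds = Suc (j - i)" using lw assms unfolding ds_def by simp
    have "hd ds = w ! i" using ld lw assms unfolding ds_def by (simp add: hd_conv_nth)
    moreover have "last ds = w ! j" using ld lw assms unfolding ds_def by (simp add: last_conv_nth)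
    ultimately have "ds \<in> D" using ld eq by (simp add: D_def Ln_def)
    moreover have "length as = i" "length bs = m - j - 1" using lw assms unfolding as_def bs_def by auto
    ultimately show "w \<in> {as @ zs | as zs. length as = i \<and> zs \<in> {ys @ xs | ys xs. ys \<in> D \<and> length xs = m - j - 1}}"
      using wd by blast
  qed
  thus ?thesis using S e by simp
qed

lemma sa_eq_coord:
  assumes "i < m" "j < m"
  shows "subanalytic m {w \<in> Ln m. w ! i = w ! j}"
proof (cases i j rule: linorder_cases)
  case less thus ?thesis using sa_diag_gen assms by blast
next
  case equal thus ?thesis using sa_Ln by simp
next
  case greater
  have "{w \<in> Ln m. w ! i = w ! j} = {w \<in> Ln m. w ! j = w ! i}" by auto
  thus ?thesis using sa_diag_gen[OF greater assms(1)] by simp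
qed

lemma sa_eq_coords:
  fixes k :: nat
  assumes "\<forall>l<k. f l < m \<and> g l < m"
  shows "subanalytic m {w \<in> Ln m. \<forall>l<k. w ! f l = w ! g l}"
  using assms
proof (induction k)
  case 0 thus ?case using sa_Ln by simp
next
  case (Suc k)
  have "{w \<in> Ln m. \<forall>l<Suc k. w ! f l = w ! g l}
     = {w \<in> Ln m. (\<forall>l<k. w ! f l = w ! g l) \<and> w ! f k = w ! g k}"
    using less_Suc_eq by auto
  moreover have "subanalytic m {w \<in> Ln m. w ! f k = w ! g k}" using Suc.prems sa_eq_coord by blast
  ultimately show ?case using sa_conj Suc by simp
qed

lemma sa_proj_pred:
  assumes "subanalytic (n + k) {w \<in> Ln (n + k). P w}"
  shows "subanalytic n {xs \<in> Ln n. \<exists>ys. length ys = k \<and> P (xs @ ys)}"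
proof -
  have "{xs. \<exists>ys. length ys = k \<and> xs @ ys \<in> {w \<in> Ln (n + k). P w}}
     = {xs \<in> Ln n. \<exists>ys. length ys = k \<and> P (xs @ ys)}" by (auto simp: Ln_def)
  thus ?thesis using sa_proj_iter[OF assms] by simp
qed

lemma sa_preimage:
  assumes A: "subanalytic k A" and s: "\<forall>i<k. \<sigma> i < n"
  shows "subanalytic n {xs \<in> Ln n. map (\<lambda>i. xs ! \<sigma> i) [0..<k] \<in> A}"
proof -
  define B where "B = {xs @ ys | xs ys. length xs = n \<and> ys \<in> A}"
  have B: "subanalytic (n + k) B" unfolding B_def by (rule sa_prod_left_iter[OF A])
  have E: "subanalytic (n + k) {w \<in> Ln (n + k). \<forall>l<k. w ! (n + l) = w ! \<sigma> l}"
    using s by (intro sa_eq_coords) auto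
  have BL: "B \<subseteq> Ln (n + k)" using sa_sub_Ln[OF B] .
  have "B \<inter> {w \<in> Ln (n + k). \<forall>l<k. w ! (n + l) = w ! \<sigma> l}
     = {w \<in> Ln (n + k). w \<in> B \<and> (\<forall>l<k. w ! (n + l) = w ! \<sigma> l)}" using BL by auto
  hence C: "subanalytic (n + k) {w \<in> Ln (n + k). w \<in> B \<and> (\<forall>l<k. w ! (n + l) = w ! \<sigma> l)}"
    using sa_inter[OF B E] by simp
  have "{xs \<in> Ln n. \<exists>ys. length ys = k \<and> (xs @ ys \<in> B \<and> (\<forall>l<k. (xs @ ys) ! (n + l) = (xs @ ys) ! \<sigma> l))}
      = {xs \<in> Ln n. map (\<lambda>i. xs ! \<sigma> i) [0..<k] \<in> A}"
  proof (intro set_eqI iffI)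
    fix xs assume "xs \<in> {xs \<in> Ln n. \<exists>ys. length ys = k \<and> (xs @ ys \<in> B \<and> (\<forall>l<k. (xs @ ys) ! (n + l) = (xs @ ys) ! \<sigma> l))}"
    then obtain ys where xs: "length xs = n" and ys: "length ys = k" "xs @ ys \<in> B"
      "\<forall>l<k. (xs @ ys) ! (n + l) = (xs @ ys) ! \<sigma> l" by (auto simp: Ln_def)
    have "ys \<in> A" using ys(2) xs unfolding B_def by auto
    moreover have "ys = map (\<lambda>i. xs ! \<sigma> i) [0..<k]"
    proof (rule nth_equalityI)
      show "length ys = length (map (\<lambda>i. xs ! \<sigma> i) [0..<k])" using ys by simp
      fix l assume "l < length ys"
      thus "ys ! l = map (\<lambda>i. xs ! \<sigma> i) [0..<k] ! l"
        using ys(1,3) xs s by (auto simp: nth_append)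
    qed
    ultimately show "xs \<in> {xs \<in> Ln n. map (\<lambda>i. xs ! \<sigma> i) [0..<k] \<in> A}" using xs by (simp add: Ln_def)
  next
    fix xs assume "xs \<in> {xs \<in> Ln n. map (\<lambda>i. xs ! \<sigma> i) [0..<k] \<in> A}"
    hence xs: "length xs = n" "map (\<lambda>i. xs ! \<sigma> i) [0..<k] \<in> A" by (auto simp: Ln_def)
    let ?ys = "map (\<lambda>i. xs ! \<sigma> i) [0..<k]"
    have "xs @ ?ys \<in> B" using xs unfolding B_def by blast
    moreover have "\<forall>l<k. (xs @ ?ys) ! (n + l) = (xs @ ?ys) ! \<sigma> l" using xs s by (auto simp: nth_append)
    ultimately have "length ?ys = k \<and> (xs @ ?ys \<in> B \<and> (\<forall>l<k. (xs @ ?ys) ! (n + l) = (xs @ ?ys) ! \<sigma> l))"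
      by simp
    thus "xs \<in> {xs \<in> Ln n. \<exists>ys. length ys = k \<and> (xs @ ys \<in> B \<and> (\<forall>l<k. (xs @ ys) ! (n + l) = (xs @ ys) ! \<sigma> l))}"
      using xs(1) unfolding Ln_def by blast
  qed
  thus ?thesis using sa_proj_pred[OF C] by simp
qed


lemma graph_mem: "(xs @ [y] \<in> {ys @ [f ys] | ys. ys \<in> X}) \<longleftrightarrow> (xs \<in> X \<and> y = f xs)"
  by auto

lemma split_last_n: "length w = Suc n \<Longrightarrow> w = map (\<lambda>i. w ! i) [0..<n] @ [w ! n]"
  by (rule nth_equalityI) (auto simp: nth_append less_Suc_eq)

lemma sa_fun_const:
  assumes X: "subanalytic n X"
  shows "subanalytic_fun n X (\<lambda>_. c)"
proof -
  have s1: "subanalytic (Suc n) {w \<in> Ln (Suc n). map (\<lambda>i. w ! i) [0..<n] \<in> X}"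
    using sa_preimage[OF X, of id "Suc n"] by simp
  have s2: "subanalytic (Suc n) {w \<in> Ln (Suc n). map (\<lambda>i. w ! (n + i)) [0..<1] \<in> {[c]}}"
    using sa_preimage[OF sa_const[of c], of "\<lambda>i. n + i" "Suc n"] by simp
  have "{w \<in> Ln (Suc n). map (\<lambda>i. w ! i) [0..<n] \<in> X \<and> map (\<lambda>i. w ! (n + i)) [0..<1] \<in> {[c]}}
     = {xs @ [c] | xs. xs \<in> X}"
  proof (intro set_eqI iffI)
    fix w assume "w \<in> {w \<in> Ln (Suc n). map (\<lambda>i. w ! i) [0..<n] \<in> X \<and> map (\<lambda>i. w ! (n + i)) [0..<1] \<in> {[c]}}"
    hence w: "length w = Suc n" "map (\<lambda>i. w ! i) [0..<n] \<in> X" "w ! n = c" by (auto simp: Ln_def)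
    thus "w \<in> {xs @ [c] | xs. xs \<in> X}" using split_last_n[OF w(1)] by blast
  next
    fix w assume "w \<in> {xs @ [c] | xs. xs \<in> X}"
    then obtain xs where "w = xs @ [c]" "xs \<in> X" by blast
    moreover have "length xs = n" using sa_sub_Ln[OF X] \<open>xs \<in> X\<close> by (auto simp: Ln_def)
    moreover have "map (\<lambda>i. (xs @ [c]) ! i) [0..<n] = xs"
      using \<open>length xs = n\<close> by (intro nth_equalityI) (auto simp: nth_append)
    ultimately show "w \<in> {w \<in> Ln (Suc n). map (\<lambda>i. w ! i) [0..<n] \<in> X \<and> map (\<lambda>i. w ! (n + i)) [0..<1] \<in> {[c]}}"
      by (auto simp: Ln_def)
  qed
  thus ?thesis using sa_conj[OF s1 s2] unfolding subanalytic_fun_def by simp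
qed

lemma sa_fun_combine:
  assumes F: "subanalytic_fun n X f" and G: "subanalytic_fun n X g" and R: "subanalytic 3 R"
    and H: "\<forall>x\<in>X. \<forall>z. [f x, g x, z] \<in> R \<longleftrightarrow> z = h x"
  shows "subanalytic_fun n X h"
proof -
  let ?Gf = "{xs @ [f xs] | xs. xs \<in> X}"
  let ?Gg = "{xs @ [g xs] | xs. xs \<in> X}"
  define s1 where "s1 = (\<lambda>i::nat. if i < n then i else Suc n)"
  define s2 where "s2 = (\<lambda>i::nat. if i < n then i else Suc (Suc n))"
  define s3 where "s3 = (\<lambda>i::nat. [Suc n, Suc (Suc n), n] ! i)"
  define P where "P w \<longleftrightarrow> map (\<lambda>i. w ! s1 i) [0..<Suc n] \<in> ?Gf \<and> map (\<lambda>i. w ! s2 i) [0..<Suc n] \<in> ?Gg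
      \<and> map (\<lambda>i. w ! s3 i) [0..<3] \<in> R" for w
  have a1: "subanalytic (Suc n + 2) {w \<in> Ln (Suc n + 2). map (\<lambda>i. w ! s1 i) [0..<Suc n] \<in> ?Gf}"
    using F unfolding subanalytic_fun_def by (rule sa_preimage) (auto simp: s1_def)
  have a2: "subanalytic (Suc n + 2) {w \<in> Ln (Suc n + 2). map (\<lambda>i. w ! s2 i) [0..<Suc n] \<in> ?Gg}"
    using G unfolding subanalytic_fun_def by (rule sa_preimage) (auto simp: s2_def)
  have a3: "subanalytic (Suc n + 2) {w \<in> Ln (Suc n + 2). map (\<lambda>i. w ! s3 i) [0..<3] \<in> R}"
    using R by (rule sa_preimage) (auto simp: s3_def less_Suc_eq numeral_3_eq_3 nth_Cons split: nat.split)
  have "subanalytic (Suc n + 2) {w \<in> Ln (Suc n + 2). P w}"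
    unfolding P_def by (intro sa_conj a1 a2 a3)
  hence PR: "subanalytic (Suc n) {v \<in> Ln (Suc n). \<exists>ys. length ys = 2 \<and> P (v @ ys)}"
    by (rule sa_proj_pred)
  have Peval: "P (xs @ [z] @ [a, b]) \<longleftrightarrow> (xs \<in> X \<and> a = f xs) \<and> (xs \<in> X \<and> b = g xs) \<and> [a, b, z] \<in> R"
    if "length xs = n" for xs z a b
  proof -
    have "map (\<lambda>i. (xs @ [z] @ [a, b]) ! s1 i) [0..<Suc n] = xs @ [a]"
      using that by (intro nth_equalityI) (auto simp: nth_append s1_def less_Suc_eq)
    moreover have "map (\<lambda>i. (xs @ [z] @ [a, b]) ! s2 i) [0..<Suc n] = xs @ [b]"
      using that by (intro nth_equalityI) (auto simp: nth_append s2_def less_Suc_eq)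
    moreover have "map (\<lambda>i. (xs @ [z] @ [a, b]) ! s3 i) [0..<3] = [a, b, z]"
      using that by (simp add: s3_def numeral_3_eq_3 nth_append)
    ultimately show ?thesis unfolding P_def by (simp only: graph_mem)
  qed
  have "{v \<in> Ln (Suc n). \<exists>ys. length ys = 2 \<and> P (v @ ys)} = {xs @ [h xs] | xs. xs \<in> X}"
  proof (intro set_eqI iffI)
    fix v assume "v \<in> {v \<in> Ln (Suc n). \<exists>ys. length ys = 2 \<and> P (v @ ys)}"
    then obtain ys where v: "length v = Suc n" "length ys = 2" "P (v @ ys)" by (auto simp: Ln_def)
    obtain a b where ys: "ys = [a, b]" using v(2)
      by (metis (no_types, lifting) One_nat_def Suc_1 length_0_conv length_Suc_conv)
    define xs where "xs = map (\<lambda>i. v ! i) [0..<n]"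
    have vx: "v = xs @ [v ! n]" unfolding xs_def by (rule split_last_n[OF v(1)])
    have lx: "length xs = n" unfolding xs_def by simp
    have "P (xs @ [v ! n] @ [a, b])" using v(3) vx ys by (metis append_assoc)
    hence "xs \<in> X" "a = f xs" "b = g xs" "[a, b, v ! n] \<in> R" using Peval[OF lx] by auto
    hence "v ! n = h xs" using H by auto
    thus "v \<in> {xs @ [h xs] | xs. xs \<in> X}" using vx \<open>xs \<in> X\<close> by auto
  next
    fix v assume "v \<in> {xs @ [h xs] | xs. xs \<in> X}"
    then obtain xs where v: "v = xs @ [h xs]" "xs \<in> X" by blast
    have lx: "length xs = n"
    proof -
      have "subanalytic n (butlast ` ?Gf)" using F sa_proj unfolding subanalytic_fun_def by blast
      moreover have "xs \<in> butlast ` ?Gf" using v(2) by force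
      ultimately show ?thesis using sa_sub_Ln unfolding Ln_def by blast
    qed
    have "[f xs, g xs, h xs] \<in> R" using H v(2) by auto
    hence "P (xs @ [h xs] @ [f xs, g xs])" using Peval[OF lx] v(2) by simp
    thus "v \<in> {v \<in> Ln (Suc n). \<exists>ys. length ys = 2 \<and> P (v @ ys)}" using v lx
      by (auto simp: Ln_def intro!: exI[of _ "[f xs, g xs]"])
  qed
  thus ?thesis using PR unfolding subanalytic_fun_def by simp
qed


lemma sa_fun_add:
  assumes "subanalytic_fun n X f" "subanalytic_fun n X g"
  shows "subanalytic_fun n X (\<lambda>x. f x + g x)"
  by (rule sa_fun_combine[OF assms sa_add]) auto

lemma sa_fun_mult:
  assumes "subanalytic_fun n X f" "subanalytic_fun n X g"
  shows "subanalytic_fun n X (\<lambda>x. f x * g x)"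
  by (rule sa_fun_combine[OF assms sa_mult]) auto

lemma sa_fun_recip:
  assumes X: "subanalytic n X" and G: "subanalytic_fun n X g" and pos: "\<forall>x\<in>X. g x > 0"
  shows "subanalytic_fun n X (\<lambda>x. 1 / g x)"
proof -
  define R where "R = {w \<in> Ln 3. map (\<lambda>i. w ! ([2, 0, 1] ! i)) [0..<3] \<in> {[x, y, x * y] | x y. True}}"
  have R: "subanalytic 3 R" unfolding R_def
    by (rule sa_preimage[OF sa_mult]) (auto simp: numeral_3_eq_3 less_Suc_eq nth_Cons split: nat.split)
  have mem: "[a, b, z] \<in> R \<longleftrightarrow> b = z * a" for a b z :: real
    by (simp add: R_def Ln_def numeral_3_eq_3)
  show ?thesis
  proof (rule sa_fun_combine[OF G sa_fun_const[OF X, of 1] R])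
    show "\<forall>x\<in>X. \<forall>z. [g x, 1, z] \<in> R \<longleftrightarrow> z = 1 / g x"
      using pos by (auto simp: mem field_simps)
  qed
qed

theorem lemma7p1:
  fixes n :: nat and X :: "real list set" and f :: "real list \<Rightarrow> real"
  assumes "subanalytic n X"
    and "constructible n X f"
  shows "\<exists>h. subanalytic_fun n X h \<and> (\<forall>x\<in>X. 0 < h x \<and> \<bar>f x\<bar> \<le> h x)"
  using assms(2)
proof (induction rule: constructible.induct)
  case (c_sa f)
  let ?h = "\<lambda>x. 1 + f x * f x"
  have "subanalytic_fun n X ?h"
    by (intro sa_fun_add sa_fun_mult sa_fun_const[OF assms(1)] c_sa)
  moreover have "0 < ?h x \<and> \<bar>f x\<bar> \<le> ?h x" for x
  proof -
    have "0 \<le> (\<bar>f x\<bar> - 1/2)^2" by simp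
    hence "\<bar>f x\<bar> \<le> 1 + \<bar>f x\<bar> * \<bar>f x\<bar>" by (simp add: power2_eq_square algebra_simps)
    moreover have "\<bar>f x\<bar> * \<bar>f x\<bar> = f x * f x" by (simp add: abs_mult_self_eq)
    moreover have "0 \<le> f x * f x" by simp
    ultimately show ?thesis by linarith
  qed
  ultimately show ?case by blast
next
  case (c_log g)
  let ?h = "\<lambda>x. g x + 1 / g x"
  have "subanalytic_fun n X ?h"
    by (intro sa_fun_add sa_fun_recip[OF assms(1)] c_log)
  moreover have "0 < ?h x \<and> \<bar>ln (g x)\<bar> \<le> ?h x" if "x \<in> X" for x
  proof -
    have gp: "g x > 0" using c_log that by auto
    have "ln (g x) \<le> g x - 1" using ln_le_minus_one gp by blast
    moreover have "ln (1 / g x) \<le> 1 / g x - 1" using ln_le_minus_one gp by simp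
    moreover have "ln (1 / g x) = - ln (g x)" using gp by (simp add: ln_div)
    moreover have "0 < 1 / g x" using gp by simp
    ultimately show ?thesis using gp by linarith
  qed
  ultimately show ?case by blast
next
  case (c_add f g)
  then obtain h1 h2 where h1: "subanalytic_fun n X h1" "\<forall>x\<in>X. 0 < h1 x \<and> \<bar>f x\<bar> \<le> h1 x"
    and h2: "subanalytic_fun n X h2" "\<forall>x\<in>X. 0 < h2 x \<and> \<bar>g x\<bar> \<le> h2 x" by blast
  have "subanalytic_fun n X (\<lambda>x. h1 x + h2 x)" by (rule sa_fun_add[OF h1(1) h2(1)])
  moreover have "\<forall>x\<in>X. 0 < h1 x + h2 x \<and> \<bar>f x + g x\<bar> \<le> h1 x + h2 x"
    using h1(2) h2(2) by (smt (verit))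
  ultimately show ?case by blast
next
  case (c_mult f g)
  then obtain h1 h2 where h1: "subanalytic_fun n X h1" "\<forall>x\<in>X. 0 < h1 x \<and> \<bar>f x\<bar> \<le> h1 x"
    and h2: "subanalytic_fun n X h2" "\<forall>x\<in>X. 0 < h2 x \<and> \<bar>g x\<bar> \<le> h2 x" by blast
  have "subanalytic_fun n X (\<lambda>x. h1 x * h2 x)" by (rule sa_fun_mult[OF h1(1) h2(1)])
  moreover have "\<forall>x\<in>X. 0 < h1 x * h2 x \<and> \<bar>f x * g x\<bar> \<le> h1 x * h2 x"
    using h1(2) h2(2) by (simp add: abs_mult mult_mono')
  ultimately show ?case by blast
next
  case (c_scale f c)
  then obtain h1 where h1: "subanalytic_fun n X h1" "\<forall>x\<in>X. 0 < h1 x \<and> \<bar>f x\<bar> \<le> h1 x" by blast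
  have "subanalytic_fun n X (\<lambda>x. (\<bar>c\<bar> + 1) * h1 x)"
    by (rule sa_fun_mult[OF sa_fun_const[OF assms(1)] h1(1)])
  moreover have "\<forall>x\<in>X. 0 < (\<bar>c\<bar> + 1) * h1 x \<and> \<bar>c * f x\<bar> \<le> (\<bar>c\<bar> + 1) * h1 x"
  proof
    fix x assume "x \<in> X"
    hence a: "0 < h1 x" "\<bar>f x\<bar> \<le> h1 x" using h1(2) by auto
    have "\<bar>c * f x\<bar> = \<bar>c\<bar> * \<bar>f x\<bar>" by (simp add: abs_mult)
    also have "\<dots> \<le> (\<bar>c\<bar> + 1) * h1 x" using a by (intro mult_mono) auto
    finally show "0 < (\<bar>c\<bar> + 1) * h1 x \<and> \<bar>c * f x\<bar> \<le> (\<bar>c\<bar> + 1) * h1 x" using a by simp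
  qed
  ultimately show ?case by blast
next
  case (c_cong f g)
  thus ?case by metis
qed

end
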